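(* Let $M$ be a matroid flock on a finite set $E$, let $\alpha,\beta\in\mathbb{Z}^E$ and let $I\subseteq E$. If $I\cap\mathrm{supp}(\beta-\alpha)=\emptyset$ and $\alpha\le\beta$ (coordinatewise), then $r_\alpha(I)\ge r_\beta(I)$.
   Context: $\mathrm{supp}(x):=\{i:x_i\neq0\}$. $e_i$ unit vectors, $\mathbf{1}$ the all-one vector in $\mathbb{Z}^E$. A matroid flock of rank $d$ on $E$ is a map $M$ assigning to each $\alpha\in\mathbb{Z}^E$ a matroid $M_\alpha$ on $E$ of rank $d$ with (MF1) $M_\alpha/i=M_{\alpha+e_i}\setminus i$ for all $\alpha$, $i\in E$ (contraction, deletion); and (MF2) $M_\alpha=M_{\alpha+\mathbf{1}}$ for all $\alpha$. $r_\alpha$ denotes the rank function of $M_\alpha$. *)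

theory Defs
  imports Main
begin

definition matroid :: "'a set \<Rightarrow> 'a set set \<Rightarrow> bool" where
  "matroid E Ind \<longleftrightarrow> finite E \<and> Ind \<subseteq> Pow E \<and> {} \<in> Ind
     \<and> (\<forall>I J. J \<in> Ind \<longrightarrow> I \<subseteq> J \<longrightarrow> I \<in> Ind)
     \<and> (\<forall>I J. I \<in> Ind \<longrightarrow> J \<in> Ind \<longrightarrow> card I < card J
          \<longrightarrow> (\<exists>x\<in>J - I. insert x I \<in> Ind))"

definition rank_of :: "'a set set \<Rightarrow> 'a set \<Rightarrow> nat" where
  "rank_of Ind X = Max {card I | I. I \<in> Ind \<and> I \<subseteq> X}"

definition mdelete :: "'a set set \<Rightarrow> 'a \<Rightarrow> 'a set set" where
  "mdelete Ind i = {I \<in> Ind. i \<notin> I}"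

text \<open>Contraction of i (a matroid on E - {i}); contracting a loop equals deleting it.\<close>
definition mcontract :: "'a set set \<Rightarrow> 'a \<Rightarrow> 'a set set" where
  "mcontract Ind i = (if {i} \<in> Ind then {I. i \<notin> I \<and> insert i I \<in> Ind}
                      else {I \<in> Ind. i \<notin> I})"

definition zvec :: "'a set \<Rightarrow> ('a \<Rightarrow> int) \<Rightarrow> bool" where
  "zvec E \<alpha> \<longleftrightarrow> (\<forall>x. x \<notin> E \<longrightarrow> \<alpha> x = 0)"

definition unitv :: "'a \<Rightarrow> 'a \<Rightarrow> int" where
  "unitv i = (\<lambda>j. if j = i then 1 else 0)"

definition onev :: "'a set \<Rightarrow> 'a \<Rightarrow> int" where
  "onev E = (\<lambda>j. if j \<in> E then 1 else 0)"

definition supp :: "('a \<Rightarrow> int) \<Rightarrow> 'a set" where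
  "supp x = {i. x i \<noteq> 0}"

definition matroid_flock :: "'a set \<Rightarrow> nat \<Rightarrow> (('a \<Rightarrow> int) \<Rightarrow> 'a set set) \<Rightarrow> bool" where
  "matroid_flock E d M \<longleftrightarrow>
     (\<forall>\<alpha>. zvec E \<alpha> \<longrightarrow> matroid E (M \<alpha>) \<and> rank_of (M \<alpha>) E = d)
   \<and> (\<forall>\<alpha> i. zvec E \<alpha> \<longrightarrow> i \<in> E \<longrightarrow> mcontract (M \<alpha>) i = mdelete (M (\<lambda>j. \<alpha> j + unitv i j)) i)
   \<and> (\<forall>\<alpha>. zvec E \<alpha> \<longrightarrow> M \<alpha> = M (\<lambda>j. \<alpha> j + onev E j))"

end

theory Submission
  imports Defs
begin

lemma rank_mono_fam:
  assumes "finite I" "{} \<in> F" "\<And>J. J \<in> F \<Longrightarrow> J \<subseteq> I \<Longrightarrow> J \<in> G"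
  shows "rank_of F I \<le> rank_of G I"
proof -
  have fin: "finite {card J | J. J \<in> G \<and> J \<subseteq> I}"
  proof (rule finite_subset)
    show "{card J | J. J \<in> G \<and> J \<subseteq> I} \<subseteq> {..card I}"
      using assms(1) card_mono by fastforce
  qed simp
  have ne: "{card J | J. J \<in> F \<and> J \<subseteq> I} \<noteq> {}" using assms(2) by blast
  have sub: "{card J | J. J \<in> F \<and> J \<subseteq> I} \<subseteq> {card J | J. J \<in> G \<and> J \<subseteq> I}"
    using assms(3) by blast
  show ?thesis unfolding rank_of_def using Max_mono[OF sub ne fin] .
qed

lemma step:
  assumes fl: "matroid_flock E d M" and z: "zvec E \<alpha>" and iE: "i \<in> E"
    and iI: "i \<notin> I" and IE: "I \<subseteq> E" and fE: "finite E"
  shows "rank_of (M (\<lambda>j. \<alpha> j + unitv i j)) I \<le> rank_of (M \<alpha>) I"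
proof -
  let ?\<beta> = "(\<lambda>j. \<alpha> j + unitv i j)"
  have zb: "zvec E ?\<beta>" using z iE unfolding zvec_def unitv_def by auto
  have mb: "matroid E (M ?\<beta>)" and ma: "matroid E (M \<alpha>)" using fl z zb unfolding matroid_flock_def by auto
  have eq: "mcontract (M \<alpha>) i = mdelete (M ?\<beta>) i" using fl z iE unfolding matroid_flock_def by auto
  have finI: "finite I" using IE fE finite_subset by blast
  have "rank_of (M ?\<beta>) I \<le> rank_of (mdelete (M ?\<beta>) i) I"
    by (rule rank_mono_fam[OF finI]) (use mb iI in \<open>auto simp: matroid_def mdelete_def\<close>)
  also have "\<dots> = rank_of (mcontract (M \<alpha>) i) I" using eq by simp
  also have "\<dots> \<le> rank_of (M \<alpha>) I"
  proof (rule rank_mono_fam[OF finI])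
    show "{} \<in> mcontract (M \<alpha>) i" using ma unfolding mcontract_def matroid_def by auto
    fix J assume "J \<in> mcontract (M \<alpha>) i" "J \<subseteq> I"
    then show "J \<in> M \<alpha>" using ma unfolding mcontract_def matroid_def
      by (auto split: if_splits)
  qed
  finally show ?thesis .
qed

theorem mainTheorem10:
  fixes E :: "'a set" and d :: nat and M :: "('a \<Rightarrow> int) \<Rightarrow> 'a set set"
    and \<alpha> \<beta> :: "'a \<Rightarrow> int" and I :: "'a set"
  assumes "finite E"
    and "matroid_flock E d M"
    and "zvec E \<alpha>" and "zvec E \<beta>"
    and "I \<subseteq> E"
    and "I \<inter> supp (\<lambda>j. \<beta> j - \<alpha> j) = {}"
    and "\<forall>i\<in>E. \<alpha> i \<le> \<beta> i"
  shows "rank_of (M \<alpha>) I \<ge> rank_of (M \<beta>) I"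
proof -
  have "\<And>\<beta>. zvec E \<beta> \<Longrightarrow> I \<inter> supp (\<lambda>j. \<beta> j - \<alpha> j) = {} \<Longrightarrow> \<forall>i\<in>E. \<alpha> i \<le> \<beta> i
     \<Longrightarrow> (\<Sum>j\<in>E. nat (\<beta> j - \<alpha> j)) = n \<Longrightarrow> rank_of (M \<beta>) I \<le> rank_of (M \<alpha>) I"
    for n
  proof (induction n)
    case 0
    have "\<forall>j\<in>E. \<beta> j = \<alpha> j" using 0 \<open>finite E\<close> by (auto simp: sum_eq_0_iff) fastforce
    then have "\<beta> = \<alpha>" using 0(1) assms(3) unfolding zvec_def by (metis ext)
    then show ?case by simp
  next
    case (Suc n)
    obtain i where iE: "i \<in> E" and lt: "\<alpha> i < \<beta> i"
    proof -
      have "\<exists>j\<in>E. nat (\<beta> j - \<alpha> j) \<noteq> 0"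
      proof (rule ccontr)
        assume "\<not> (\<exists>j\<in>E. nat (\<beta> j - \<alpha> j) \<noteq> 0)"
        then have "(\<Sum>j\<in>E. nat (\<beta> j - \<alpha> j)) = 0" by (intro sum.neutral) blast
        then show False using Suc.prems(4) by simp
      qed
      then obtain j where "j \<in> E" "nat (\<beta> j - \<alpha> j) \<noteq> 0" by blast
      then have "j \<in> E" "\<alpha> j < \<beta> j" by auto
      then show ?thesis using that by blast
    qed
    define \<beta>' where "\<beta>' = (\<lambda>j. \<beta> j - unitv i j)"
    have iI: "i \<notin> I" using Suc.prems(2) lt unfolding supp_def by auto
    have z': "zvec E \<beta>'" using Suc.prems(1) iE unfolding zvec_def \<beta>'_def unitv_def by auto
    have d': "I \<inter> supp (\<lambda>j. \<beta>' j - \<alpha> j) = {}" using Suc.prems(2) iI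
      unfolding supp_def \<beta>'_def unitv_def by auto
    have le': "\<forall>j\<in>E. \<alpha> j \<le> \<beta>' j" using Suc.prems(3) lt unfolding \<beta>'_def unitv_def by auto
    have "(\<Sum>j\<in>E. nat (\<beta> j - \<alpha> j)) = (\<Sum>j\<in>E. nat (\<beta>' j - \<alpha> j) + (if j = i then 1 else 0))"
      using lt by (intro sum.cong) (auto simp: \<beta>'_def unitv_def)
    also have "\<dots> = (\<Sum>j\<in>E. nat (\<beta>' j - \<alpha> j)) + 1"
      using iE \<open>finite E\<close> by (simp add: sum.distrib)
    finally have s': "(\<Sum>j\<in>E. nat (\<beta>' j - \<alpha> j)) = n" using Suc.prems(4) by simp
    have ih: "rank_of (M \<beta>') I \<le> rank_of (M \<alpha>) I" using Suc.IH[OF z' d' le' s'] .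
    have "\<beta> = (\<lambda>j. \<beta>' j + unitv i j)" by (auto simp: \<beta>'_def)
    then have "rank_of (M \<beta>) I \<le> rank_of (M \<beta>') I"
      using step[OF assms(2) z' iE iI assms(5) assms(1)] by simp
    with ih show ?case by simp
  qed
  from this[OF assms(4) assms(6) assms(7) refl] show ?thesis by simp
qed

end
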